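(* Let $n\ge1$, $z\in I_n$, and assume (H2)$_j(z)$ and (H3)$_j(z)$ for all $1\le j\le n$. Then for every $1\le j\le n$ and every $k\in[-\pi,\pi]^d$ with $a(k)\le\gamma j^{-1}\log j$, $$|f_j(k;z)|\le e^{CK_3\beta}\,e^{-(1-C(K_2+K_3)\beta)\,j\,a(k)},$$ where $C$ is a positive constant depending only on $d,\gamma,\delta,\rho$ (not on $K_1,\dots,K_5$, $k$, $j$, $n$, or $\beta$), valid for $\beta$ sufficiently small (depending on the $K_i$).
   Context: Let $d>4$, $L\ge1$, $\beta=L^{-d}$; fix $\gamma,\delta,\rho>0$ with $0<\frac{d-4}{2}-\rho<\gamma<\gamma+\delta<1\wedge\frac{d-4}{2}$. Let $D\ge0$ on $\mathbb Z^d$ with $\sum_xD(x)=1$, $\hat D(k)=\sum_xD(x)e^{ik\cdot x}$, $a(k)=1-\hat D(k)$, $\sigma^2=-\nabla^2\hat D(0)$. For $z>0$, $k\in[-\pi,\pi]^d$ let $f_n(k;z)$ ($n\ge0$, $f_0=1$), $g_n(k;z)$ ($n\ge1$) be complex numbers, and $v_0(z)=1$, $v_n(z)=b_n/(1+c_n)$ with $b_n=-\sigma^{-2}\sum_{m=1}^n\nabla^2g_m(0;z)$, $c_n=\sum_{m=1}^n(m-1)g_m(0;z)$. Let $z_0=z_1=1$, $z_{n+1}=1-\sum_{m=2}^{n+1}g_m(0;z_n)$, and given constants $K_1,\dots,K_5>0$, $I_n=[z_n-K_1\beta n^{-(d-2)/2},z_n+K_1\beta n^{-(d-2)/2}]$.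 (H2)$_j(z)$: $|v_j(z)-v_{j-1}(z)|\le K_2\beta j^{-(d-2)/2}$. (H3)$_j(z)$: for all $k$ with $a(k)\le\gamma j^{-1}\log j$, $f_j(k;z)=\prod_{i=1}^j[1-v_i(z)a(k)+r_i(k)]$ for some numbers $r_i(k)=r_i(k;z)$ with $|r_i(0)|\le K_3\beta i^{-(d-2)/2}$ and $|r_i(k)-r_i(0)|\le K_3\beta a(k)i^{-\delta}$. *)

theory Defs
  imports "HOL-Analysis.Analysis"
begin

text \<open>Fourier transform of a function D on Z^d (Z^d rendered as int^'n, d = CARD('n)):
  Dhat(k) = sum_x D(x) e^{i k.x}.\<close>
definition Dhat :: "(int^'n \<Rightarrow> real) \<Rightarrow> real^'n \<Rightarrow> complex" where
  "Dhat D k = infsum (\<lambda>x. complex_of_real (D x) * cis (k \<bullet> (\<chi> i. real_of_int (x $ i)))) UNIV"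

definition afun :: "(int^'n \<Rightarrow> real) \<Rightarrow> real^'n \<Rightarrow> complex" where
  "afun D k = 1 - Dhat D k"

definition lap0 :: "(real^'n \<Rightarrow> complex) \<Rightarrow> complex" where
  "lap0 F = (\<Sum>i\<in>UNIV. vector_derivative
      (\<lambda>t. vector_derivative (\<lambda>s. F (axis i s)) (at t)) (at 0))"

definition sigma2 :: "(int^'n \<Rightarrow> real) \<Rightarrow> complex" where
  "sigma2 D = - lap0 (Dhat D)"

text \<open>b_n, c_n, v_n; g :: m \<Rightarrow> k \<Rightarrow> z \<Rightarrow> complex stands for g_m(k;z).\<close>
definition bfun :: "(int^'n \<Rightarrow> real) \<Rightarrow> (nat \<Rightarrow> real^'n \<Rightarrow> real \<Rightarrow> complex) \<Rightarrow> real \<Rightarrow> nat \<Rightarrow> complex" where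
  "bfun D g z n = - (1 / sigma2 D) * (\<Sum>m=1..n. lap0 (\<lambda>k. g m k z))"

definition cfun :: "(nat \<Rightarrow> real^'n \<Rightarrow> real \<Rightarrow> complex) \<Rightarrow> real \<Rightarrow> nat \<Rightarrow> complex" where
  "cfun g z n = (\<Sum>m=1..n. of_nat (m - 1) * g m 0 z)"

definition vfun :: "(int^'n \<Rightarrow> real) \<Rightarrow> (nat \<Rightarrow> real^'n \<Rightarrow> real \<Rightarrow> complex) \<Rightarrow> real \<Rightarrow> nat \<Rightarrow> complex" where
  "vfun D g z n = (if n = 0 then 1 else bfun D g z n / (1 + cfun g z n))"

text \<open>z_0 = z_1 = 1, z_{n+1} = 1 - sum_{m=2}^{n+1} g_m(0;z_n)
  (real part taken; g_m(0;z) is real in the paper).\<close>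
fun zseq :: "(nat \<Rightarrow> real^'n \<Rightarrow> real \<Rightarrow> complex) \<Rightarrow> nat \<Rightarrow> real" where
  "zseq g 0 = 1"
| "zseq g (Suc n) = (if n = 0 then 1 else 1 - Re (\<Sum>m=2..Suc n. g m 0 (zseq g n)))"

definition Iint :: "(nat \<Rightarrow> real^'n \<Rightarrow> real \<Rightarrow> complex) \<Rightarrow> real \<Rightarrow> real \<Rightarrow> nat \<Rightarrow> real set" where
  "Iint g K1 \<beta> n = {zseq g n - K1 * \<beta> * real n powr (-(real CARD('n) - 2) / 2) ..
                     zseq g n + K1 * \<beta> * real n powr (-(real CARD('n) - 2) / 2)}"

definition box_pi :: "(real^'n) set" where
  "box_pi = {k. \<forall>i. -pi \<le> k $ i \<and> k $ i \<le> pi}"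

text \<open>a(k) \<le> gamma j^{-1} log j (a(k) is required to be real for the inequality to make sense).\<close>
definition small_a :: "(int^'n \<Rightarrow> real) \<Rightarrow> real \<Rightarrow> nat \<Rightarrow> real^'n \<Rightarrow> bool" where
  "small_a D \<gamma> j k \<longleftrightarrow> Im (afun D k) = 0 \<and> Re (afun D k) \<le> \<gamma> / real j * ln (real j)"

definition H2 :: "(int^'n \<Rightarrow> real) \<Rightarrow> (nat \<Rightarrow> real^'n \<Rightarrow> real \<Rightarrow> complex) \<Rightarrow> real \<Rightarrow> real \<Rightarrow> nat \<Rightarrow> real \<Rightarrow> bool" where
  "H2 D g K2 \<beta> j z \<longleftrightarrow>
     cmod (vfun D g z j - vfun D g z (j - 1)) \<le> K2 * \<beta> * real j powr (-(real CARD('n) - 2) / 2)"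

definition H3 :: "(int^'n \<Rightarrow> real) \<Rightarrow> (nat \<Rightarrow> real^'n \<Rightarrow> real \<Rightarrow> complex) \<Rightarrow>
    (nat \<Rightarrow> real^'n \<Rightarrow> real \<Rightarrow> complex) \<Rightarrow> real \<Rightarrow> real \<Rightarrow> real \<Rightarrow> real \<Rightarrow> nat \<Rightarrow> real \<Rightarrow> bool" where
  "H3 D f g \<gamma> \<delta> K3 \<beta> j z \<longleftrightarrow>
     (\<exists>r :: nat \<Rightarrow> real^'n \<Rightarrow> complex.
        (\<forall>k \<in> box_pi. small_a D \<gamma> j k \<longrightarrow>
           f j k z = (\<Prod>i=1..j. 1 - vfun D g z i * afun D k + r i k)
         \<and> (\<forall>i\<in>{1..j}. cmod (r i 0) \<le> K3 * \<beta> * real i powr (-(real CARD('n) - 2) / 2)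
                      \<and> cmod (r i k - r i 0) \<le> K3 * \<beta> * Re (afun D k) * real i powr (-\<delta>))))"

end

theory Submission
  imports Defs
begin

lemma factor_bound:
  fixes a A B E :: real and w r0 rk :: complex
  assumes "0 \<le> a" "a \<le> 1" "cmod w \<le> A" "cmod r0 \<le> B" "cmod (rk - r0) \<le> E * a"
  shows "cmod (1 - (1 + w) * complex_of_real a + rk) \<le> exp (- a * (1 - A - E) + B)"
proof -
  have eq: "1 - (1 + w) * complex_of_real a + rk
      = complex_of_real (1 - a) - w * complex_of_real a + r0 + (rk - r0)"
    by (simp add: algebra_simps)
  have "cmod (complex_of_real (1 - a) - w * complex_of_real a + r0 + (rk - r0))
      \<le> cmod (complex_of_real (1 - a)) + cmod (w * complex_of_real a) + cmod r0 + cmod (rk - r0)"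
    by (meson norm_triangle_ineq norm_triangle_ineq4 order_trans add_mono order_refl)
  also have "cmod (complex_of_real (1 - a)) = 1 - a" using assms by (simp only: norm_of_real)
  also have "cmod (w * complex_of_real a) = cmod w * a" using assms by (simp add: norm_mult)
  also have "cmod w * a \<le> A * a" using assms by (simp add: mult_right_mono)
  finally have "cmod (1 - (1 + w) * complex_of_real a + rk) \<le> 1 + (- a * (1 - A - E) + B)"
    using assms eq by (simp add: algebra_simps)
  also have "\<dots> \<le> exp (- a * (1 - A - E) + B)" by (rule exp_ge_add_one_self)
  finally show ?thesis .
qed

theorem lemma2p2:
  fixes \<gamma> \<delta> \<rho> :: real
  assumes "CARD('n) > 4"
    and "\<rho> > 0" and "\<gamma> > 0" and "\<delta> > 0"
    and "0 < (real CARD('n) - 4) / 2 - \<rho>"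
    and "(real CARD('n) - 4) / 2 - \<rho> < \<gamma>"
    and "\<gamma> + \<delta> < min 1 ((real CARD('n) - 4) / 2)"
  shows "\<exists>C > 0. \<forall>(K1::real) (K2::real) (K3::real) (K4::real) (K5::real). K1 > 0 \<and> K2 > 0 \<and> K3 > 0 \<and> K4 > 0 \<and> K5 > 0 \<longrightarrow>
    (\<exists>\<beta>0 > 0. \<forall>(\<beta>::real) (L::real) (D :: int^'n \<Rightarrow> real)
        (f :: nat \<Rightarrow> real^'n \<Rightarrow> real \<Rightarrow> complex) (g :: nat \<Rightarrow> real^'n \<Rightarrow> real \<Rightarrow> complex)
        (n::nat) (z::real) (j::nat) (k::real^'n).
       L \<ge> 1 \<and> \<beta> = L powr (- real CARD('n)) \<and> \<beta> \<le> \<beta>0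
       \<and> (\<forall>x. D x \<ge> 0) \<and> (D has_sum 1) UNIV
       \<and> (\<forall>k' z'. f 0 k' z' = 1)
       \<and> n \<ge> 1 \<and> z > 0 \<and> z \<in> Iint g K1 \<beta> n
       \<and> (\<forall>j'\<in>{1..n}. H2 D g K2 \<beta> j' z \<and> H3 D f g \<gamma> \<delta> K3 \<beta> j' z)
       \<and> j \<in> {1..n} \<and> k \<in> box_pi \<and> small_a D \<gamma> j k
       \<longrightarrow> cmod (f j k z) \<le> exp (C * K3 * \<beta>) *
              exp (- (1 - C * (K2 + K3) * \<beta>) * real j * Re (afun D k)))"
proof -
  define p :: real where "p = -(real CARD('n) - 2) / 2"
  have pl: "p < -1" using assms(1) unfolding p_def by simp
  have summ: "summable (\<lambda>i::nat. real i powr p)"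
    using pl by (simp add: summable_real_powr_iff)
  define S where "S = suminf (\<lambda>i::nat. real i powr p)"
  have S0: "0 \<le> S" unfolding S_def by (rule suminf_nonneg[OF summ]) simp
  have sumS: "(\<Sum>i=1..m. real i powr p) \<le> S" for m
    unfolding S_def by (rule sum_le_suminf[OF summ]) auto
  define C where "C = S + 1"
  show ?thesis
  proof (rule exI[of _ C], intro conjI allI impI)
    show "C > 0" using S0 by (simp add: C_def)
    fix K1 K2 K3 K4 K5 :: real
    assume K: "K1 > 0 \<and> K2 > 0 \<and> K3 > 0 \<and> K4 > 0 \<and> K5 > 0"
    show "\<exists>\<beta>0 > 0. \<forall>(\<beta>::real) (L::real) (D :: int^'n \<Rightarrow> real)
        (f :: nat \<Rightarrow> real^'n \<Rightarrow> real \<Rightarrow> complex) (g :: nat \<Rightarrow> real^'n \<Rightarrow> real \<Rightarrow> complex)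
        (n::nat) (z::real) (j::nat) (k::real^'n).
       L \<ge> 1 \<and> \<beta> = L powr (- real CARD('n)) \<and> \<beta> \<le> \<beta>0
       \<and> (\<forall>x. D x \<ge> 0) \<and> (D has_sum 1) UNIV
       \<and> (\<forall>k' z'. f 0 k' z' = 1)
       \<and> n \<ge> 1 \<and> z > 0 \<and> z \<in> Iint g K1 \<beta> n
       \<and> (\<forall>j'\<in>{1..n}. H2 D g K2 \<beta> j' z \<and> H3 D f g \<gamma> \<delta> K3 \<beta> j' z)
       \<and> j \<in> {1..n} \<and> k \<in> box_pi \<and> small_a D \<gamma> j k
       \<longrightarrow> cmod (f j k z) \<le> exp (C * K3 * \<beta>) *
              exp (- (1 - C * (K2 + K3) * \<beta>) * real j * Re (afun D k))"
    proof (rule exI[of _ 1], intro conjI allI impI)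
      show "(0::real) < 1" by simp
      fix \<beta> L :: real and D :: "int^'n \<Rightarrow> real"
        and f g :: "nat \<Rightarrow> real^'n \<Rightarrow> real \<Rightarrow> complex" and n :: nat and z :: real
        and j :: nat and k :: "real^'n"
      assume H: "L \<ge> 1 \<and> \<beta> = L powr (- real CARD('n)) \<and> \<beta> \<le> 1
       \<and> (\<forall>x. D x \<ge> 0) \<and> (D has_sum 1) UNIV
       \<and> (\<forall>k' z'. f 0 k' z' = 1)
       \<and> n \<ge> 1 \<and> z > 0 \<and> z \<in> Iint g K1 \<beta> n
       \<and> (\<forall>j'\<in>{1..n}. H2 D g K2 \<beta> j' z \<and> H3 D f g \<gamma> \<delta> K3 \<beta> j' z)
       \<and> j \<in> {1..n} \<and> k \<in> box_pi \<and> small_a D \<gamma> j k"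
      have b0: "\<beta> > 0" using H by simp
      have j1: "1 \<le> j" "j \<le> n" using H by auto
      have H2: "\<And>i. i \<in> {1..n} \<Longrightarrow> cmod (vfun D g z i - vfun D g z (i - 1)) \<le> K2 * \<beta> * real i powr p"
        using H unfolding H2_def p_def by blast
      have "H3 D f g \<gamma> \<delta> K3 \<beta> j z" using H j1 by auto
      then obtain r where r: "\<forall>k \<in> box_pi. small_a D \<gamma> j k \<longrightarrow>
           f j k z = (\<Prod>i=1..j. 1 - vfun D g z i * afun D k + r i k)
         \<and> (\<forall>i\<in>{1..j}. cmod (r i 0) \<le> K3 * \<beta> * real i powr p
                      \<and> cmod (r i k - r i 0) \<le> K3 * \<beta> * Re (afun D k) * real i powr (-\<delta>))"
        unfolding H3_def p_def by blast
      have kk: "k \<in> box_pi" "small_a D \<gamma> j k" using H by auto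
      note r' = r[rule_format, OF kk]
      define a where "a = Re (afun D k)"
      have aeq: "afun D k = complex_of_real a"
        using kk(2) unfolding small_a_def a_def by (simp add: complex_eq_iff)
      have a0: "0 \<le> a"
      proof -
        have "0 \<le> K3 * \<beta> * a * real 1 powr (-\<delta>)"
          using r' j1 unfolding a_def by (meson atLeastAtMost_iff norm_ge_zero order_trans order_refl)
        then have h: "0 \<le> (K3 * \<beta>) * a" by (metis powr_one_eq_one of_nat_1 mult_1_right)
        have pos: "K3 * \<beta> > 0" using K b0 by simp
        show ?thesis
        proof (rule ccontr)
          assume "\<not> 0 \<le> a"
          then have "(K3 * \<beta>) * a < 0" using pos by (simp add: mult_pos_neg)
          then show False using h by linarith
        qed
      qed
      have a1: "a \<le> 1"
      proof -
        have "ln (real j) \<le> real j - 1" using j1 by (intro ln_le_minus_one) auto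
        hence "ln (real j) / real j \<le> 1" using j1 by (simp add: divide_simps)
        moreover have "0 \<le> ln (real j)" using j1 by simp
        moreover have g1: "\<gamma> \<le> 1" using assms(4,7) by simp
        ultimately have "\<gamma> * (ln (real j) / real j) \<le> 1 * 1"
          using assms(3) by (intro mult_mono) auto
        then have "\<gamma> / real j * ln (real j) \<le> 1" by simp
        then show ?thesis using kk(2) unfolding small_a_def a_def by simp
      qed
      have vb: "cmod (vfun D g z i - 1) \<le> K2 * \<beta> * (\<Sum>m=1..i. real m powr p)" if "i \<le> n" for i
        using that
      proof (induction i)
        case 0 then show ?case by (simp add: vfun_def)
      next
        case (Suc i)
        have "cmod (vfun D g z (Suc i) - 1) \<le> cmod (vfun D g z (Suc i) - vfun D g z i) + cmod (vfun D g z i - 1)"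
          by (metis diff_add_cancel norm_triangle_ineq add_diff_eq)
        also have "\<dots> \<le> K2 * \<beta> * real (Suc i) powr p + K2 * \<beta> * (\<Sum>m=1..i. real m powr p)"
          using H2[of "Suc i"] Suc by (intro add_mono) auto
        finally show ?case by (simp add: algebra_simps)
      qed
      have vb2: "cmod (vfun D g z i - 1) \<le> K2 * \<beta> * S" if "i \<le> n" for i
        using vb[OF that] sumS[of i] K b0 by (smt (verit) mult_left_mono mult_pos_pos)
      have fac: "cmod (1 - vfun D g z i * afun D k + r i k) \<le>
          exp (- a * (1 - K2 * \<beta> * S - K3 * \<beta>) + K3 * \<beta> * real i powr p)" if "i \<in> {1..j}" for i
      proof -
        have e1: "1 - vfun D g z i * afun D k + r i k
            = 1 - (1 + (vfun D g z i - 1)) * complex_of_real a + r i k" by (simp add: aeq)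
        have "1 \<le> real i powr \<delta>" using that assms(4) by (intro ge_one_powr_ge_zero) auto
        hence "real i powr (-\<delta>) \<le> 1" by (simp add: powr_minus divide_simps)
        hence "cmod (r i k - r i 0) \<le> K3 * \<beta> * a"
          using r' that K b0 a0 unfolding a_def
          by (smt (verit) mult_left_le mult_nonneg_nonneg)
        then show ?thesis unfolding e1
          using that j1 r' a0 a1 by (intro factor_bound vb2) auto
      qed
      have "cmod (f j k z) = (\<Prod>i=1..j. cmod (1 - vfun D g z i * afun D k + r i k))"
        using r' by (simp add: prod_norm)
      also have "\<dots> \<le> (\<Prod>i=1..j. exp (- a * (1 - K2 * \<beta> * S - K3 * \<beta>) + K3 * \<beta> * real i powr p))"
        using fac by (intro prod_mono) auto
      also have "\<dots> = exp (\<Sum>i=1..j. - a * (1 - K2 * \<beta> * S - K3 * \<beta>) + K3 * \<beta> * real i powr p)"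
        by (simp add: exp_sum)
      also have "(\<Sum>i=1..j. - a * (1 - K2 * \<beta> * S - K3 * \<beta>) + K3 * \<beta> * real i powr p)
          = - real j * a * (1 - K2 * \<beta> * S - K3 * \<beta>) + K3 * \<beta> * (\<Sum>i=1..j. real i powr p)"
        by (simp add: sum.distrib sum_distrib_left sum_subtractf)
      also have "\<dots> \<le> C * K3 * \<beta> + (- (1 - C * (K2 + K3) * \<beta>) * real j * a)"
      proof -
        have "K3 * \<beta> * (\<Sum>i=1..j. real i powr p) \<le> K3 * \<beta> * S"
          using sumS[of j] K b0 by (simp add: mult_left_mono)
        also have "\<dots> \<le> C * K3 * \<beta>" using K b0 S0 unfolding C_def by (simp add: algebra_simps)
        finally have 1: "K3 * \<beta> * (\<Sum>i=1..j. real i powr p) \<le> C * K3 * \<beta>" .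
        have "K2 * S + K3 \<le> C * (K2 + K3)" using K S0 unfolding C_def by (simp add: algebra_simps)
        hence "(K2 * S + K3) * (\<beta> * real j * a) \<le> C * (K2 + K3) * (\<beta> * real j * a)"
          using b0 a0 by (intro mult_right_mono) auto
        then have 2: "- real j * a * (1 - K2 * \<beta> * S - K3 * \<beta>) \<le> - (1 - C * (K2 + K3) * \<beta>) * real j * a"
          by (simp add: algebra_simps)
        show ?thesis using 1 2 by simp
      qed
      finally show "cmod (f j k z) \<le> exp (C * K3 * \<beta>) *
              exp (- (1 - C * (K2 + K3) * \<beta>) * real j * Re (afun D k))"
        by (simp add: a_def exp_add[symmetric])
    qed
  qed
qed

end
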